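(* Let $\gamma_X=(X,d_X(\cdot))$ and $\gamma_Y=(Y,d_Y(\cdot))$ be any two dynamic metric spaces. Then \[\mathbf{d}_{\mathrm{I}}^{\mathbf{Sets}}(\theta(\gamma_X),\theta(\gamma_Y))\le 2\cdot d_{\mathtt{dyn}}(\gamma_X,\gamma_Y).\]
   Context: A dynamic metric space (DMS) is a pair $\gamma_X=(X,d_X(\cdot))$ where $X$ is a nonempty finite set and $d_X(\cdot):\mathbf{R}\times X\times X\to\mathbf{R}_+$ satisfies: each $d_X(t)$ is a pseudometric, some $d_X(t_0)$ is a metric, and $t\mapsto d_X(t)(x,x')$ is continuous for all $x,x'$. $\mathbf{Int}$ is the set of finite closed intervals of $\mathbf{R}$; $(\bigvee_I d_X)(x,x'):=\min_{s\in I}d_X(s)(x,x')$; for $I=[u,u']$, $I^\varepsilon=[u-\varepsilon,u'+\varepsilon]$; $[t]^\varepsilon=[t-\varepsilon,t+\varepsilon]$. A tripod between $X$ and $Y$ is a set $Z$ with surjections $\varphi_X:Z\to X$, $\varphi_Y:Z\to Y$; it is an $\varepsilon$-tripod between $\gamma_X,\gamma_Y$ if for all $t\in\mathbf{R}$, $z,z'\in Z$: $(\bigvee_{[t]^\varepsilon}d_X)(\varphi_X(z),\varphi_X(z'))\le d_Y(t)(\varphi_Y(z),\varphi_Y(z'))+2\varepsilon$ and $(\bigvee_{[t]^\varepsilon}d_Y)(\varphi_Y(z),\varphi_Y(z'))\le d_X(t)(\varphi_X(z),\varphi_X(z'))+2\varepsilon$. $d_{\mathtt{dyn}}(\gamma_X,\gamma_Y)$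 is the minimum over tripods of the infimum of $\varepsilon$ for which the tripod is an $\varepsilon$-tripod ($\infty$ if none). Order $\mathbf{Int}\times\mathbf{R}_+$ by $(I,\delta)\le(J,\delta')$ iff $I\subseteq J$, $\delta\le\delta'$. For $(I,\delta)$, let $\sim^I_{X,\delta}$ be the equivalence relation on $X$: $x\sim x'$ iff there are $x=x_0,\dots,x_n=x'$ with $(\bigvee_I d_X)(x_i,x_{i+1})\le\delta$. The spatiotemporal SLHC dendrogram $\theta(\gamma_X):\mathbf{Int}\times\mathbf{R}_+\to\mathbf{Sets}$ sends $(I,\delta)$ to the partition $X/\sim^I_{X,\delta}$ and $(I,\delta)\le(J,\delta')$ to the natural map sending each block to the block of $X/\sim^J_{X,\delta'}$ containing it. For functors $F,G:\mathbf{Int}\times\mathbf{R}_+\to\mathbf{Sets}$, an $\varepsilon$-interleaving consists of natural families of maps $f_{(I,\delta)}:F_{(I,\delta)}\to G_{(I^\varepsilon,\delta+\varepsilon)}$, $g_{(I,\delta)}:G_{(I,\delta)}\to F_{(I^\varepsilon,\delta+\varepsilon)}$ with $g_{(I^\varepsilon,\delta+\varepsilon)}\circ f_{(I,\delta)}=F((I,\delta)\le(I^{2\varepsilon},\delta+2\varepsilon))$ and $f_{(I^\varepsilon,\delta+\varepsilon)}\circ g_{(I,\delta)}=G((I,\delta)\le(I^{2\varepsilon},\delta+2\varepsilon))$. $\mathbf{d}_{\mathrm{I}}^{\mathbf{Sets}}(F,G)$ is the infimum of $\varepsilon$ admitting such an interleaving with all $f_{(I,\delta)},g_{(I,\delta)}$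 surjective ($\infty$ if none). *)

theory Defs
  imports "HOL-Analysis.Analysis" "HOL-Library.Extended_Real"
begin

definition is_pseudometric :: "'a set \<Rightarrow> ('a \<Rightarrow> 'a \<Rightarrow> real) \<Rightarrow> bool" where
  "is_pseudometric X d \<longleftrightarrow>
     (\<forall>x\<in>X. \<forall>y\<in>X. d x y \<ge> 0) \<and> (\<forall>x\<in>X. d x x = 0) \<and>
     (\<forall>x\<in>X. \<forall>y\<in>X. d x y = d y x) \<and>
     (\<forall>x\<in>X. \<forall>y\<in>X. \<forall>z\<in>X. d x z \<le> d x y + d y z)"

definition is_metric_on :: "'a set \<Rightarrow> ('a \<Rightarrow> 'a \<Rightarrow> real) \<Rightarrow> bool" where
  "is_metric_on X d \<longleftrightarrow> is_pseudometric X d \<and> (\<forall>x\<in>X. \<forall>y\<in>X. d x y = 0 \<longrightarrow> x = y)"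

definition DMS :: "'a set \<Rightarrow> (real \<Rightarrow> 'a \<Rightarrow> 'a \<Rightarrow> real) \<Rightarrow> bool" where
  "DMS X d \<longleftrightarrow> finite X \<and> X \<noteq> {} \<and>
     (\<forall>t. is_pseudometric X (d t)) \<and>
     (\<exists>t0. is_metric_on X (d t0)) \<and>
     (\<forall>x\<in>X. \<forall>y\<in>X. continuous_on UNIV (\<lambda>t. d t x y))"

text \<open>Finite closed intervals [u,u'] are represented as pairs (u,u') with u \<le> u'.\<close>
definition bigvee :: "(real \<Rightarrow> 'a \<Rightarrow> 'a \<Rightarrow> real) \<Rightarrow> real \<times> real \<Rightarrow> 'a \<Rightarrow> 'a \<Rightarrow> real" where
  "bigvee d I x y = (INF s\<in>{fst I..snd I}. d s x y)"

definition thicken :: "real \<Rightarrow> real \<times> real \<Rightarrow> real \<times> real" where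
  "thicken e I = (fst I - e, snd I + e)"

definition tripod :: "'c set \<Rightarrow> ('c \<Rightarrow> 'a) \<Rightarrow> ('c \<Rightarrow> 'b) \<Rightarrow> 'a set \<Rightarrow> 'b set \<Rightarrow> bool" where
  "tripod Z pX pY X Y \<longleftrightarrow> pX ` Z = X \<and> pY ` Z = Y"

definition eps_tripod ::
  "real \<Rightarrow> 'c set \<Rightarrow> ('c \<Rightarrow> 'a) \<Rightarrow> ('c \<Rightarrow> 'b) \<Rightarrow>
   'a set \<Rightarrow> (real \<Rightarrow> 'a \<Rightarrow> 'a \<Rightarrow> real) \<Rightarrow> 'b set \<Rightarrow> (real \<Rightarrow> 'b \<Rightarrow> 'b \<Rightarrow> real) \<Rightarrow> bool" where
  "eps_tripod e Z pX pY X dX Y dY \<longleftrightarrow> tripod Z pX pY X Y \<and>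
     (\<forall>t. \<forall>z\<in>Z. \<forall>z'\<in>Z.
        bigvee dX (t - e, t + e) (pX z) (pX z') \<le> dY t (pY z) (pY z') + 2 * e \<and>
        bigvee dY (t - e, t + e) (pY z) (pY z') \<le> dX t (pX z) (pX z') + 2 * e)"

text \<open>Tripods are taken with Z a set of pairs (any tripod can be replaced by its
  image in X \<times> Y, which has the same distortion).\<close>
definition d_dyn :: "'a set \<Rightarrow> (real \<Rightarrow> 'a \<Rightarrow> 'a \<Rightarrow> real) \<Rightarrow> 'b set \<Rightarrow> (real \<Rightarrow> 'b \<Rightarrow> 'b \<Rightarrow> real) \<Rightarrow> ereal" where
  "d_dyn X dX Y dY =
     (INF T \<in> {(Z :: ('a \<times> 'b) set, pX, pY). tripod Z pX pY X Y}.
        (case T of (Z, pX, pY) \<Rightarrow>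
          Inf {ereal e | e. e \<ge> 0 \<and> eps_tripod e Z pX pY X dX Y dY}))"

definition idx :: "((real \<times> real) \<times> real) set" where
  "idx = {(I, \<delta>). fst I \<le> snd I \<and> \<delta> \<ge> 0}"

definition idx_le :: "(real \<times> real) \<times> real \<Rightarrow> (real \<times> real) \<times> real \<Rightarrow> bool" where
  "idx_le a b \<longleftrightarrow> {fst (fst a)..snd (fst a)} \<subseteq> {fst (fst b)..snd (fst b)} \<and> snd a \<le> snd b"

definition shift :: "real \<Rightarrow> (real \<times> real) \<times> real \<Rightarrow> (real \<times> real) \<times> real" where
  "shift e a = (thicken e (fst a), snd a + e)"

definition slhc_rel :: "'a set \<Rightarrow> (real \<Rightarrow> 'a \<Rightarrow> 'a \<Rightarrow> real) \<Rightarrow> (real \<times> real) \<times> real \<Rightarrow> 'a \<Rightarrow> 'a \<Rightarrow> bool" where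
  "slhc_rel X d a = (\<lambda>x y. x \<in> X \<and> y \<in> X \<and> bigvee d (fst a) x y \<le> snd a)\<^sup>*\<^sup>*"

definition slhc_class :: "'a set \<Rightarrow> (real \<Rightarrow> 'a \<Rightarrow> 'a \<Rightarrow> real) \<Rightarrow> (real \<times> real) \<times> real \<Rightarrow> 'a \<Rightarrow> 'a set" where
  "slhc_class X d a x = {y \<in> X. slhc_rel X d a x y}"

definition theta_obj :: "'a set \<Rightarrow> (real \<Rightarrow> 'a \<Rightarrow> 'a \<Rightarrow> real) \<Rightarrow> (real \<times> real) \<times> real \<Rightarrow> 'a set set" where
  "theta_obj X d a = slhc_class X d a ` X"

definition theta_map :: "'a set \<Rightarrow> (real \<Rightarrow> 'a \<Rightarrow> 'a \<Rightarrow> real) \<Rightarrow>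
    (real \<times> real) \<times> real \<Rightarrow> (real \<times> real) \<times> real \<Rightarrow> 'a set \<Rightarrow> 'a set" where
  "theta_map X d a b B = (THE C. C \<in> theta_obj X d b \<and> B \<subseteq> C)"

text \<open>A functor is given by its object map F0 and its morphism map F1 a b (for a \<le> b).
  The maps f, g are families indexed by objects; equalities of maps are required on the domains.\<close>
definition eps_interleaving ::
  "real \<Rightarrow> (((real \<times> real) \<times> real) \<Rightarrow> 'c set) \<Rightarrow> (((real \<times> real) \<times> real) \<Rightarrow> ((real \<times> real) \<times> real) \<Rightarrow> 'c \<Rightarrow> 'c)
   \<Rightarrow> (((real \<times> real) \<times> real) \<Rightarrow> 'd set) \<Rightarrow> (((real \<times> real) \<times> real) \<Rightarrow> ((real \<times> real) \<times> real) \<Rightarrow> 'd \<Rightarrow> 'd)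
   \<Rightarrow> (((real \<times> real) \<times> real) \<Rightarrow> 'c \<Rightarrow> 'd) \<Rightarrow> (((real \<times> real) \<times> real) \<Rightarrow> 'd \<Rightarrow> 'c) \<Rightarrow> bool" where
  "eps_interleaving e F0 F1 G0 G1 f g \<longleftrightarrow>
     (\<forall>a\<in>idx. f a ` F0 a = G0 (shift e a)) \<and>
     (\<forall>a\<in>idx. g a ` G0 a = F0 (shift e a)) \<and>
     (\<forall>a\<in>idx. \<forall>b\<in>idx. idx_le a b \<longrightarrow>
        (\<forall>x\<in>F0 a. G1 (shift e a) (shift e b) (f a x) = f b (F1 a b x)) \<and>
        (\<forall>y\<in>G0 a. F1 (shift e a) (shift e b) (g a y) = g b (G1 a b y))) \<and>
     (\<forall>a\<in>idx. \<forall>x\<in>F0 a. g (shift e a) (f a x) = F1 a (shift (2 * e) a) x) \<and>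
     (\<forall>a\<in>idx. \<forall>y\<in>G0 a. f (shift e a) (g a y) = G1 a (shift (2 * e) a) y)"

definition dI_sets ::
  "(((real \<times> real) \<times> real) \<Rightarrow> 'c set) \<Rightarrow> (((real \<times> real) \<times> real) \<Rightarrow> ((real \<times> real) \<times> real) \<Rightarrow> 'c \<Rightarrow> 'c)
   \<Rightarrow> (((real \<times> real) \<times> real) \<Rightarrow> 'd set) \<Rightarrow> (((real \<times> real) \<times> real) \<Rightarrow> ((real \<times> real) \<times> real) \<Rightarrow> 'd \<Rightarrow> 'd)
   \<Rightarrow> ereal" where
  "dI_sets F0 F1 G0 G1 = Inf {ereal e | e. e \<ge> 0 \<and> (\<exists>f g. eps_interleaving e F0 F1 G0 G1 f g)}"

end

theory Submission
  imports Defs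
begin

lemma dms_nonneg: "DMS X d \<Longrightarrow> x \<in> X \<Longrightarrow> y \<in> X \<Longrightarrow> d s x y \<ge> 0"
  unfolding DMS_def is_pseudometric_def by blast

lemma dms_sym: "DMS X d \<Longrightarrow> x \<in> X \<Longrightarrow> y \<in> X \<Longrightarrow> d s x y = d s y x"
  unfolding DMS_def is_pseudometric_def by blast

lemma dms_zero: "DMS X d \<Longrightarrow> x \<in> X \<Longrightarrow> d s x x = 0"
  unfolding DMS_def is_pseudometric_def by blast

lemma dms_bdd: "DMS X d \<Longrightarrow> x \<in> X \<Longrightarrow> y \<in> X \<Longrightarrow> bdd_below ((\<lambda>s. d s x y) ` S)"
  by (rule bdd_belowI[of _ 0]) (auto dest: dms_nonneg)

lemma bigvee_mono:
  assumes "DMS X d" "x \<in> X" "y \<in> X" "fst I \<le> snd I" "{fst I..snd I} \<subseteq> {fst J..snd J}"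
  shows "bigvee d J x y \<le> bigvee d I x y"
  unfolding bigvee_def
  by (rule cINF_superset_mono) (use assms dms_bdd in auto)

lemma bigvee_sym: "DMS X d \<Longrightarrow> x \<in> X \<Longrightarrow> y \<in> X \<Longrightarrow> bigvee d I x y = bigvee d I y x"
  unfolding bigvee_def using dms_sym by (metis (no_types, lifting) image_cong)

lemma bigvee_zero: "DMS X d \<Longrightarrow> x \<in> X \<Longrightarrow> fst I \<le> snd I \<Longrightarrow> bigvee d I x x = 0"
  unfolding bigvee_def by (simp add: dms_zero)

lemma bigvee_attain:
  assumes "DMS X d" "x \<in> X" "y \<in> X" "fst I \<le> snd I"
  shows "\<exists>s\<in>{fst I..snd I}. d s x y \<le> bigvee d I x y"
proof -
  have "continuous_on UNIV (\<lambda>t. d t x y)"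
    using assms(1-3) unfolding DMS_def by blast
  then have c: "continuous_on {fst I..snd I} (\<lambda>t. d t x y)"
    by (rule continuous_on_subset) simp
  have ne: "{fst I..snd I} \<noteq> {}" using assms(4) by simp
  obtain s where s: "s \<in> {fst I..snd I}" "\<forall>t\<in>{fst I..snd I}. d s x y \<le> d t x y"
    using continuous_attains_inf[OF compact_Icc ne c] by blast
  have "d s x y \<le> bigvee d I x y"
    unfolding bigvee_def by (rule cINF_greatest) (use s assms(4) in auto)
  with s show ?thesis by blast
qed

lemma rel_mem: "slhc_rel X d a x y \<Longrightarrow> x \<in> X \<Longrightarrow> y \<in> X"
  unfolding slhc_rel_def by (induction rule: rtranclp_induct) auto

lemma rel_refl: "slhc_rel X d a x x"
  unfolding slhc_rel_def by simp

lemma rel_trans: "slhc_rel X d a x y \<Longrightarrow> slhc_rel X d a y z \<Longrightarrow> slhc_rel X d a x z"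
  unfolding slhc_rel_def by simp

lemma rel_sym: assumes "DMS X d" "slhc_rel X d a x y" shows "slhc_rel X d a y x"
proof -
  have "(\<lambda>x y. x \<in> X \<and> y \<in> X \<and> bigvee d (fst a) x y \<le> snd a)\<^sup>*\<^sup>* y x"
    using assms(2) unfolding slhc_rel_def
  proof (induction rule: rtranclp_induct)
    case base then show ?case by simp
  next
    case (step y z)
    then have h: "(\<lambda>x y. x \<in> X \<and> y \<in> X \<and> bigvee d (fst a) x y \<le> snd a) z y"
      using bigvee_sym[OF assms(1)] by metis
    show ?case by (rule converse_rtranclp_into_rtranclp[OF h step.IH])
  qed
  then show ?thesis unfolding slhc_rel_def .
qed

lemma class_eq: "DMS X d \<Longrightarrow> slhc_rel X d a x y \<Longrightarrow> slhc_class X d a x = slhc_class X d a y"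
  unfolding slhc_class_def using rel_sym rel_trans by metis

lemma class_self: "x \<in> X \<Longrightarrow> x \<in> slhc_class X d a x"
  unfolding slhc_class_def using rel_refl by fast

lemma rel_mono:
  assumes "DMS X d" "a \<in> idx" "idx_le a b" "slhc_rel X d a x y"
  shows "slhc_rel X d b x y"
proof -
  have "\<And>u v. u \<in> X \<Longrightarrow> v \<in> X \<Longrightarrow> bigvee d (fst a) u v \<le> snd a \<Longrightarrow> bigvee d (fst b) u v \<le> snd b"
  proof -
    fix u v assume uv: "u \<in> X" "v \<in> X" "bigvee d (fst a) u v \<le> snd a"
    have "bigvee d (fst b) u v \<le> bigvee d (fst a) u v"
      by (rule bigvee_mono) (use assms uv in \<open>auto simp: idx_def idx_le_def\<close>)
    then show "bigvee d (fst b) u v \<le> snd b" using uv assms(3) unfolding idx_le_def by linarith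
  qed
  note key = this
  from assms(4) show ?thesis unfolding slhc_rel_def
  proof (induction rule: rtranclp_induct)
    case base show ?case by simp
  next
    case (step y z)
    have "(\<lambda>x y. x \<in> X \<and> y \<in> X \<and> bigvee d (fst b) x y \<le> snd b) y z"
      using step.hyps(2) key by blast
    from rtranclp.rtrancl_into_rtrancl[OF step.IH this] show ?case .
  qed
qed

lemma theta_map_class:
  assumes "DMS X d" "a \<in> idx" "idx_le a b" "x \<in> X"
  shows "theta_map X d a b (slhc_class X d a x) = slhc_class X d b x"
  unfolding theta_map_def
proof (rule the_equality)
  have "slhc_class X d b x \<in> theta_obj X d b"
    unfolding theta_obj_def using assms(4) by blast
  moreover have "slhc_class X d a x \<subseteq> slhc_class X d b x"
    unfolding slhc_class_def using rel_mono[OF assms(1-3)] by blast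
  ultimately show "slhc_class X d b x \<in> theta_obj X d b \<and> slhc_class X d a x \<subseteq> slhc_class X d b x"
    by blast
next
  fix C assume C: "C \<in> theta_obj X d b \<and> slhc_class X d a x \<subseteq> C"
  then obtain y where y: "y \<in> X" "C = slhc_class X d b y" unfolding theta_obj_def by auto
  have "x \<in> slhc_class X d a x" using class_self assms(4) by fast
  then have "x \<in> C" using C by blast
  then have r: "slhc_rel X d b y x" using y by (simp add: slhc_class_def)
  show "C = slhc_class X d b x" using y(2) class_eq[OF assms(1) r] by simp
qed


lemma shift_idx: "E \<ge> 0 \<Longrightarrow> a \<in> idx \<Longrightarrow> shift E a \<in> idx"
  unfolding idx_def shift_def thicken_def by auto

lemma shift_le: "a \<in> idx \<Longrightarrow> E \<ge> 0 \<Longrightarrow> idx_le a b \<Longrightarrow> idx_le (shift E a) (shift E b)"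
  unfolding idx_def shift_def thicken_def idx_le_def by auto

lemma shift_self: "a \<in> idx \<Longrightarrow> E \<ge> 0 \<Longrightarrow> idx_le a (shift E a)"
  unfolding idx_def shift_def thicken_def idx_le_def by auto

lemma shift_shift: "shift E (shift E a) = shift (2 * E) a"
  unfolding shift_def thicken_def by auto

lemma eps_tripod_sym: "eps_tripod e Z pX pY X dX Y dY \<Longrightarrow> eps_tripod e Z pY pX Y dY X dX"
  unfolding eps_tripod_def tripod_def by blast

definition fmap :: "real \<Rightarrow> 'c set \<Rightarrow> ('c \<Rightarrow> 'a) \<Rightarrow> ('c \<Rightarrow> 'b) \<Rightarrow> 'b set \<Rightarrow>
    (real \<Rightarrow> 'b \<Rightarrow> 'b \<Rightarrow> real) \<Rightarrow> (real \<times> real) \<times> real \<Rightarrow> 'a set \<Rightarrow> 'b set" where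
  "fmap E Z pX pY Y dY a B = slhc_class Y dY (shift E a) (pY (SOME z. z \<in> Z \<and> pX z \<in> B))"

lemma L1:
  assumes dx: "DMS X dX" and dy: "DMS Y dY" and tr: "eps_tripod e Z pX pY X dX Y dY" and e: "e \<ge> 0"
    and a: "a \<in> idx" and z: "z \<in> Z" "z' \<in> Z"
    and le: "bigvee dX (fst a) (pX z) (pX z') \<le> snd a"
  shows "bigvee dY (fst (shift (2*e) a)) (pY z) (pY z') \<le> snd (shift (2*e) a)"
proof -
  have mem: "pX z \<in> X" "pX z' \<in> X" "pY z \<in> Y" "pY z' \<in> Y"
    using tr z unfolding eps_tripod_def tripod_def by auto
  have I: "fst (fst a) \<le> snd (fst a)" using a unfolding idx_def by auto
  obtain s where s: "s \<in> {fst (fst a)..snd (fst a)}" "dX s (pX z) (pX z') \<le> bigvee dX (fst a) (pX z) (pX z')"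
    using bigvee_attain[OF dx mem(1,2) I] by blast
  have "bigvee dY (s - e, s + e) (pY z) (pY z') \<le> dX s (pX z) (pX z') + 2 * e"
    using tr z unfolding eps_tripod_def by blast
  moreover have "bigvee dY (fst (shift (2*e) a)) (pY z) (pY z') \<le> bigvee dY (s - e, s + e) (pY z) (pY z')"
    by (rule bigvee_mono[OF dy mem(3,4)]) (use e s in \<open>auto simp: shift_def thicken_def\<close>)
  ultimately show ?thesis using s le by (simp add: shift_def)
qed

lemma K:
  assumes dx: "DMS X dX" and dy: "DMS Y dY" and tr: "eps_tripod e Z pX pY X dX Y dY" and e: "e \<ge> 0"
    and a: "a \<in> idx" and r: "slhc_rel X dX a x w"
  shows "\<forall>z z'. z \<in> Z \<longrightarrow> z' \<in> Z \<longrightarrow> pX z = x \<longrightarrow> pX z' = w \<longrightarrow>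
           slhc_rel Y dY (shift (2*e) a) (pY z) (pY z')"
  using r unfolding slhc_rel_def[of X]
proof (induction rule: rtranclp_induct)
  case base
  show ?case
  proof (intro allI impI)
    fix z z' assume h: "z \<in> Z" "z' \<in> Z" "pX z = x" "pX z' = x"
    have mem: "pX z \<in> X" "pY z \<in> Y" "pY z' \<in> Y"
      using tr h unfolding eps_tripod_def tripod_def by auto
    have "bigvee dX (fst a) (pX z) (pX z') = 0"
      using h bigvee_zero[OF dx mem(1)] a unfolding idx_def by auto
    also have "\<dots> \<le> snd a" using a unfolding idx_def by auto
    finally have "bigvee dY (fst (shift (2*e) a)) (pY z) (pY z') \<le> snd (shift (2*e) a)"
      using L1[OF dx dy tr e a h(1,2)] by blast
    then show "slhc_rel Y dY (shift (2*e) a) (pY z) (pY z')"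
      unfolding slhc_rel_def using mem by (simp add: r_into_rtranclp)
  qed
next
  case (step w u)
  show ?case
  proof (intro allI impI)
    fix z z' assume h: "z \<in> Z" "z' \<in> Z" "pX z = x" "pX z' = u"
    have "w \<in> X" using step.hyps(2) by blast
    then obtain z'' where z'': "z'' \<in> Z" "pX z'' = w"
      using tr unfolding eps_tripod_def tripod_def by blast
    have r1: "slhc_rel Y dY (shift (2*e) a) (pY z) (pY z'')" using step.IH h z'' by blast
    have mem: "pY z'' \<in> Y" "pY z' \<in> Y"
      using tr h z'' unfolding eps_tripod_def tripod_def by auto
    have "bigvee dY (fst (shift (2*e) a)) (pY z'') (pY z') \<le> snd (shift (2*e) a)"
      using L1[OF dx dy tr e a z''(1) h(2)] step.hyps(2) z'' h by blast
    then have "slhc_rel Y dY (shift (2*e) a) (pY z'') (pY z')"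
      unfolding slhc_rel_def using mem by (simp add: r_into_rtranclp)
    then show "slhc_rel Y dY (shift (2*e) a) (pY z) (pY z')" using r1 rel_trans by metis
  qed
qed

lemma F:
  assumes dx: "DMS X dX" and dy: "DMS Y dY" and tr: "eps_tripod e Z pX pY X dX Y dY" and e: "e \<ge> 0"
    and a: "a \<in> idx" and z0: "z0 \<in> Z"
  shows "fmap (2*e) Z pX pY Y dY a (slhc_class X dX a (pX z0)) = slhc_class Y dY (shift (2*e) a) (pY z0)"
proof -
  have x0: "pX z0 \<in> X" using tr z0 unfolding eps_tripod_def tripod_def by auto
  have ex: "\<exists>z. z \<in> Z \<and> pX z \<in> slhc_class X dX a (pX z0)"
    using z0 class_self[OF x0] by blast
  define z1 where "z1 = (SOME z. z \<in> Z \<and> pX z \<in> slhc_class X dX a (pX z0))"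
  have z1: "z1 \<in> Z" "pX z1 \<in> slhc_class X dX a (pX z0)"
    using someI_ex[OF ex] unfolding z1_def by blast+
  then have "slhc_rel X dX a (pX z0) (pX z1)" by (simp add: slhc_class_def)
  then have "slhc_rel Y dY (shift (2*e) a) (pY z0) (pY z1)"
    using K[OF dx dy tr e a] z0 z1 by blast
  then have "slhc_class Y dY (shift (2*e) a) (pY z0) = slhc_class Y dY (shift (2*e) a) (pY z1)"
    by (rule class_eq[OF dy])
  then show ?thesis unfolding fmap_def z1_def[symmetric] by simp
qed

lemma theta_obj_Z:
  assumes tr: "eps_tripod e Z pX pY X dX Y dY"
  shows "theta_obj X dX a = (\<lambda>z. slhc_class X dX a (pX z)) ` Z"
  using tr unfolding eps_tripod_def tripod_def theta_obj_def by auto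

lemma surjF:
  assumes dx: "DMS X dX" and dy: "DMS Y dY" and tr: "eps_tripod e Z pX pY X dX Y dY" and e: "e \<ge> 0"
    and a: "a \<in> idx"
  shows "fmap (2*e) Z pX pY Y dY a ` theta_obj X dX a = theta_obj Y dY (shift (2*e) a)"
proof -
  have "fmap (2*e) Z pX pY Y dY a ` theta_obj X dX a
      = (\<lambda>z. fmap (2*e) Z pX pY Y dY a (slhc_class X dX a (pX z))) ` Z"
    unfolding theta_obj_Z[OF tr] by (simp add: image_image)
  also have "\<dots> = (\<lambda>z. slhc_class Y dY (shift (2*e) a) (pY z)) ` Z"
    using F[OF dx dy tr e a] by simp
  also have "\<dots> = theta_obj Y dY (shift (2*e) a)"
    using theta_obj_Z[OF eps_tripod_sym[OF tr]] by simp
  finally show ?thesis .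
qed


lemma natF:
  assumes dx: "DMS X dX" and dy: "DMS Y dY" and tr: "eps_tripod e Z pX pY X dX Y dY" and e: "e \<ge> 0"
    and a: "a \<in> idx" and b: "b \<in> idx" and ab: "idx_le a b" and x: "x \<in> theta_obj X dX a"
  shows "theta_map Y dY (shift (2*e) a) (shift (2*e) b) (fmap (2*e) Z pX pY Y dY a x)
         = fmap (2*e) Z pX pY Y dY b (theta_map X dX a b x)"
proof -
  obtain z0 where z0: "z0 \<in> Z" "x = slhc_class X dX a (pX z0)"
    using x theta_obj_Z[OF tr] by auto
  have m: "pX z0 \<in> X" "pY z0 \<in> Y" using tr z0 unfolding eps_tripod_def tripod_def by auto
  have e2: "2*e \<ge> 0" using e by simp
  have "theta_map Y dY (shift (2*e) a) (shift (2*e) b) (fmap (2*e) Z pX pY Y dY a x)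
      = theta_map Y dY (shift (2*e) a) (shift (2*e) b) (slhc_class Y dY (shift (2*e) a) (pY z0))"
    using F[OF dx dy tr e a z0(1)] z0(2) by simp
  also have "\<dots> = slhc_class Y dY (shift (2*e) b) (pY z0)"
    by (rule theta_map_class[OF dy shift_idx[OF e2 a] shift_le[OF a e2 ab] m(2)])
  also have "\<dots> = fmap (2*e) Z pX pY Y dY b (slhc_class X dX b (pX z0))"
    using F[OF dx dy tr e b z0(1)] by simp
  also have "\<dots> = fmap (2*e) Z pX pY Y dY b (theta_map X dX a b x)"
    using theta_map_class[OF dx a ab m(1)] z0(2) by simp
  finally show ?thesis .
qed

lemma compF:
  assumes dx: "DMS X dX" and dy: "DMS Y dY" and tr: "eps_tripod e Z pX pY X dX Y dY" and e: "e \<ge> 0"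
    and a: "a \<in> idx" and x: "x \<in> theta_obj X dX a"
  shows "fmap (2*e) Z pY pX X dX (shift (2*e) a) (fmap (2*e) Z pX pY Y dY a x)
         = theta_map X dX a (shift (2 * (2*e)) a) x"
proof -
  obtain z0 where z0: "z0 \<in> Z" "x = slhc_class X dX a (pX z0)"
    using x theta_obj_Z[OF tr] by auto
  have m: "pX z0 \<in> X" "pY z0 \<in> Y" using tr z0 unfolding eps_tripod_def tripod_def by auto
  have e2: "2*e \<ge> 0" "2*(2*e) \<ge> 0" using e by simp_all
  have "fmap (2*e) Z pY pX X dX (shift (2*e) a) (fmap (2*e) Z pX pY Y dY a x)
      = fmap (2*e) Z pY pX X dX (shift (2*e) a) (slhc_class Y dY (shift (2*e) a) (pY z0))"
    using F[OF dx dy tr e a z0(1)] z0(2) by simp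
  also have "\<dots> = slhc_class X dX (shift (2*e) (shift (2*e) a)) (pX z0)"
    by (rule F[OF dy dx eps_tripod_sym[OF tr] e shift_idx[OF e2(1) a] z0(1)])
  also have "\<dots> = slhc_class X dX (shift (2*(2*e)) a) (pX z0)"
    by (simp add: shift_shift)
  also have "\<dots> = theta_map X dX a (shift (2 * (2*e)) a) x"
    using theta_map_class[OF dx a shift_self[OF a e2(2)] m(1)] z0(2) by simp
  finally show ?thesis .
qed

lemma interleave:
  assumes dx: "DMS X dX" and dy: "DMS Y dY" and tr: "eps_tripod e Z pX pY X dX Y dY" and e: "e \<ge> 0"
  shows "eps_interleaving (2*e) (theta_obj X dX) (theta_map X dX) (theta_obj Y dY) (theta_map Y dY)
           (fmap (2*e) Z pX pY Y dY) (fmap (2*e) Z pY pX X dX)"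
  unfolding eps_interleaving_def
proof (intro conjI ballI impI)
  fix a assume a: "a \<in> idx"
  show "fmap (2*e) Z pX pY Y dY a ` theta_obj X dX a = theta_obj Y dY (shift (2*e) a)"
    by (rule surjF[OF dx dy tr e a])
  show "fmap (2*e) Z pY pX X dX a ` theta_obj Y dY a = theta_obj X dX (shift (2*e) a)"
    by (rule surjF[OF dy dx eps_tripod_sym[OF tr] e a])
next
  fix a b x assume a: "a \<in> idx" and b: "b \<in> idx" and ab: "idx_le a b" and x: "x \<in> theta_obj X dX a"
  show "theta_map Y dY (shift (2*e) a) (shift (2*e) b) (fmap (2*e) Z pX pY Y dY a x)
         = fmap (2*e) Z pX pY Y dY b (theta_map X dX a b x)"
    by (rule natF[OF dx dy tr e a b ab x])
next
  fix a b y assume a: "a \<in> idx" and b: "b \<in> idx" and ab: "idx_le a b" and y: "y \<in> theta_obj Y dY a"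
  show "theta_map X dX (shift (2*e) a) (shift (2*e) b) (fmap (2*e) Z pY pX X dX a y)
         = fmap (2*e) Z pY pX X dX b (theta_map Y dY a b y)"
    by (rule natF[OF dy dx eps_tripod_sym[OF tr] e a b ab y])
next
  fix a x assume a: "a \<in> idx" and x: "x \<in> theta_obj X dX a"
  show "fmap (2*e) Z pY pX X dX (shift (2*e) a) (fmap (2*e) Z pX pY Y dY a x)
         = theta_map X dX a (shift (2 * (2*e)) a) x"
    by (rule compF[OF dx dy tr e a x])
next
  fix a y assume a: "a \<in> idx" and y: "y \<in> theta_obj Y dY a"
  show "fmap (2*e) Z pX pY Y dY (shift (2*e) a) (fmap (2*e) Z pY pX X dX a y)
         = theta_map Y dY a (shift (2 * (2*e)) a) y"
    by (rule compF[OF dy dx eps_tripod_sym[OF tr] e a y])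
qed

theorem theorem6p17:
  fixes X :: "'a set" and dX :: "real \<Rightarrow> 'a \<Rightarrow> 'a \<Rightarrow> real"
    and Y :: "'b set" and dY :: "real \<Rightarrow> 'b \<Rightarrow> 'b \<Rightarrow> real"
  assumes "DMS X dX" and "DMS Y dY"
  shows "dI_sets (theta_obj X dX) (theta_map X dX) (theta_obj Y dY) (theta_map Y dY)
           \<le> 2 * d_dyn X dX Y dY"
proof -
  define D where "D = dI_sets (theta_obj X dX) (theta_map X dX) (theta_obj Y dY) (theta_map Y dY)"
  have key: "ereal (1/2) * D \<le> ereal e"
    if "e \<ge> 0" "eps_tripod e Z pX pY X dX Y dY" for e and Z :: "('a \<times> 'b) set" and pX pY
  proof -
    have "D \<le> ereal (2*e)"
      unfolding D_def dI_sets_def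
      by (rule Inf_lower) (use interleave[OF assms that(2) that(1)] that(1) in auto)
    then have "ereal (1/2) * D \<le> ereal (1/2) * ereal (2*e)"
      by (rule ereal_mult_left_mono) simp
    then show ?thesis by simp
  qed
  have "ereal (1/2) * D \<le> d_dyn X dX Y dY"
    unfolding d_dyn_def
    by (rule INF_greatest) (auto intro!: Inf_greatest key)
  then have "2 * (ereal (1/2) * D) \<le> 2 * d_dyn X dX Y dY"
    by (rule ereal_mult_left_mono) simp
  moreover have "2 * (ereal (1/2) * D) = D"
    by (simp add: mult.assoc[symmetric])
  ultimately show ?thesis unfolding D_def by simp
qed

end
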